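(* For non-negative integers $n,p$ define \begin{multline*} h(n,p)=\frac{4p^2+2p}{n+2p+1}+4p-2+(4p^2+4np+2n+6p+2)2^{1-n}+2^{1-2p}-(4p^2+2np+2n+6p+2)2^{1-n-2p}\\ +2^{1-n-2p}\sum_{i=1}^{p} i\Big\{2\binom{n+2p+3}{n+2i+1}-\binom{n+2p+3}{n+2i+2}-(2n+4p+4)\binom{2p+3}{2i+1}\Big\}\\ +2^{2-n}\sum_{i=1}^{p}\sum_{k=2i-1}^{2p} i\,2^{-k}\Big\{\frac{n+2p}{n+2p+1}\binom{n+k+2}{n+2i+1}-\binom{n+k+2}{n+2i}+\binom{k+3}{2i+1}\Big\}\\ +2^{1-2p}\sum_{i=1}^{p}\sum_{k=1}^{n} i\,2^{-k}\Big\{\binom{k+2p+3}{k+2i+2}-\frac{2n+4p+4}{n+2p+1}\binom{k+2p+2}{k+2i+1}\Big\}. \end{multline*} Then $h(n,p)=0$ for all integers $n,p\ge0$.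
   Context: $\binom{a}{b}=\frac{a!}{b!(a-b)!}$ for integers $0\le b\le a$. A sum with no terms equals $0$. *)

theory Defs
  imports Complex_Main
begin

definition h :: "nat \<Rightarrow> nat \<Rightarrow> real" where
"h n p =
   (4*real p^2 + 2*real p) / (real n + 2*real p + 1) + 4*real p - 2
 + (4*real p^2 + 4*real n*real p + 2*real n + 6*real p + 2) * 2 powr (1 - real n)
 + 2 powr (1 - 2*real p)
 - (4*real p^2 + 2*real n*real p + 2*real n + 6*real p + 2) * 2 powr (1 - real n - 2*real p)
 + 2 powr (1 - real n - 2*real p) *
     (\<Sum>i=1..p. real i * (2 * real ((n+2*p+3) choose (n+2*i+1))
                          - real ((n+2*p+3) choose (n+2*i+2))
                          - (2*real n + 4*real p + 4) * real ((2*p+3) choose (2*i+1))))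
 + 2 powr (2 - real n) *
     (\<Sum>i=1..p. \<Sum>k=2*i-1..2*p. real i * 2 powr (- real k) *
        ((real n + 2*real p) / (real n + 2*real p + 1) * real ((n+k+2) choose (n+2*i+1))
         - real ((n+k+2) choose (n+2*i)) + real ((k+3) choose (2*i+1))))
 + 2 powr (1 - 2*real p) *
     (\<Sum>i=1..p. \<Sum>k=1..n. real i * 2 powr (- real k) *
        (real ((k+2*p+3) choose (k+2*i+2))
         - (2*real n + 4*real p + 4) / (real n + 2*real p + 1) * real ((k+2*p+2) choose (k+2*i+1))))"

end

theory Submission
  imports Defs
begin

definition ss :: "nat \<Rightarrow> nat \<Rightarrow> real" where
  "ss m r = (\<Sum>j\<le>r. real (m choose j))"

lemma ss_0[simp]: "ss m 0 = 1" by (simp add: ss_def)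

lemma ss_step: "ss m (Suc r) = ss m r + real (m choose Suc r)"
  by (simp add: ss_def)

lemma ss_Suc: "ss (Suc m) r = 2 * ss m r - real (m choose r)"
proof (induction r)
  case 0 then show ?case by simp
next
  case (Suc r) then show ?case by (simp add: ss_step)
qed

lemma ss_full_aux: "ss m (m + d) = 2^m"
proof (induction d)
  case 0 then show ?case by (simp add: ss_def flip: of_nat_sum add: choose_row_sum)
next
  case (Suc d) then show ?case by (simp add: ss_step)
qed

lemma ss_full: "m \<le> r \<Longrightarrow> ss m r = 2^m"
  using ss_full_aux[of m "r - m"] by simp

lemma ss_compl: "r < m \<Longrightarrow> ss m r + ss m (m - Suc r) = 2^m"
proof (induction m arbitrary: r)
  case 0 then show ?case by simp
next
  case (Suc m)
  show ?case
  proof (cases "r = m")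
    case True
    then show ?thesis by (simp add: ss_Suc ss_full)
  next
    case False
    with Suc.prems have rm: "r < m" by simp
    have e: "Suc m - Suc r = Suc (m - Suc r)" using rm by simp
    have c: "m choose Suc (m - Suc r) = m choose r"
      using rm by (metis Suc_diff_Suc binomial_symmetric less_imp_le diff_diff_cancel)
    have "ss (Suc m) (Suc m - Suc r) = 2 * ss m (Suc (m - Suc r)) - real (m choose Suc (m - Suc r))"
      unfolding e by (rule ss_Suc)
    also have "\<dots> = 2 * ss m (m - Suc r) + real (m choose r)"
      unfolding ss_step c by simp
    finally have 1: "ss (Suc m) (Suc m - Suc r) = 2 * ss m (m - Suc r) + real (m choose r)" .
    have 2: "ss (Suc m) r = 2 * ss m r - real (m choose r)" by (rule ss_Suc)
    show ?thesis using 1 2 Suc.IH[OF rm] by simp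
  qed
qed

lemma tele: "(\<Sum>k\<in>{a..<a+d}. real ((k+c) choose r)/2^k)
   = 2*ss (a+c) r/2^a - 2*ss (a+d+c) r/2^(a+d)"
proof (induction d)
  case 0 then show ?case by simp
next
  case (Suc d)
  have key: "2*ss (a+d+c) r/2^(a+d) - 2*ss (Suc (a+d+c)) r/2^(a+Suc d) = real ((a+d+c) choose r)/2^(a+d)"
    by (simp add: ss_Suc power_add field_simps)
  have "(\<Sum>k\<in>{a..<a+Suc d}. real ((k+c) choose r)/2^k) = (\<Sum>k\<in>{a..<a+d}. real ((k+c) choose r)/2^k) + real ((a+d+c) choose r)/2^(a+d)"
    by (simp add: add.commute add.left_commute)
  then show ?case using Suc.IH key by (simp add: algebra_simps)
qed

lemma mom1: "(\<Sum>i\<le>m. real i * real (m choose i)) = real m * 2^(m-1)"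
proof -
  have "(\<Sum>i\<le>m. real i * real (m choose i)) = real (\<Sum>i\<le>m. i * (m choose i))"
    by (simp add: of_nat_sum)
  also have "\<dots> = real m * 2^(m-1)" by (simp add: choose_linear_sum)
  finally show ?thesis .
qed

lemma mom0: "(\<Sum>i\<le>m. real (m choose i)) = 2^m"
  by (simp flip: of_nat_sum add: choose_row_sum)

lemma mom2: "(\<Sum>i\<le>Suc n. real i ^ 2 * real (Suc n choose i)) = real (Suc n) * (real n * 2^(n-1) + 2^n)"
proof -
  have "(\<Sum>i\<le>Suc n. real i ^ 2 * real (Suc n choose i)) = (\<Sum>k\<le>n. real (Suc k) ^ 2 * real (Suc n choose Suc k))"
    by (simp only: sum.atMost_Suc_shift) simp
  also have "\<dots> = (\<Sum>k\<le>n. real (Suc n) * (real k * real (n choose k) + real (n choose k)))"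
  proof (rule sum.cong[OF refl])
    fix k
    have "real (Suc k) * real (Suc n choose Suc k) = real (Suc n) * real (n choose k)"
      by (metis Suc_times_binomial of_nat_mult)
    then have "real (Suc k) ^ 2 * real (Suc n choose Suc k) = real (Suc k) * (real (Suc n) * real (n choose k))"
      by (simp only: power2_eq_square mult.assoc)
    then show "real (Suc k) ^ 2 * real (Suc n choose Suc k) = real (Suc n) * (real k * real (n choose k) + real (n choose k))"
      by (simp add: algebra_simps)
  qed
  also have "\<dots> = real (Suc n) * ((\<Sum>k\<le>n. real k * real (n choose k)) + (\<Sum>k\<le>n. real (n choose k)))"
    by (simp only: sum.distrib[symmetric] sum_distrib_left)
  finally show ?thesis by (simp add: mom0 mom1)
qed

lemma alt0: "0 < n \<Longrightarrow> (\<Sum>i\<le>n. (-1)^i * real (n choose i)) = 0"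
  by (rule choose_alternating_sum)

lemma alt1: "n \<noteq> 1 \<Longrightarrow> (\<Sum>i\<le>n. (-1)^i * real i * real (n choose i)) = 0"
  by (rule choose_alternating_linear_sum)

lemma alt2: "2 \<le> n \<Longrightarrow> (\<Sum>i\<le>Suc n. (-1)^i * real i ^ 2 * real (Suc n choose i)) = 0"
proof -
  assume n: "2 \<le> n"
  have "(\<Sum>i\<le>Suc n. (-1)^i * real i ^ 2 * real (Suc n choose i)) = (\<Sum>k\<le>n. (-1)^Suc k * real (Suc k) ^ 2 * real (Suc n choose Suc k))"
    by (simp only: sum.atMost_Suc_shift) simp
  also have "\<dots> = (\<Sum>k\<le>n. - real (Suc n) * ((-1)^k * real k * real (n choose k) + (-1)^k * real (n choose k)))"
  proof (rule sum.cong[OF refl])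
    fix k
    have "real (Suc k) * real (Suc n choose Suc k) = real (Suc n) * real (n choose k)"
      by (metis Suc_times_binomial of_nat_mult)
    then have "real (Suc k) ^ 2 * real (Suc n choose Suc k) = real (Suc k) * (real (Suc n) * real (n choose k))"
      by (simp only: power2_eq_square mult.assoc)
    then show "(-1)^Suc k * real (Suc k) ^ 2 * real (Suc n choose Suc k) = - real (Suc n) * ((-1)^k * real k * real (n choose k) + (-1)^k * real (n choose k))"
      by (simp add: algebra_simps)
  qed
  also have "\<dots> = - real (Suc n) * ((\<Sum>k\<le>n. (-1)^k * real k * real (n choose k)) + (\<Sum>k\<le>n. (-1)^k * real (n choose k)))"
    by (simp only: sum.distrib[symmetric] sum_distrib_left)
  also have "\<dots> = 0" using n by (simp add: alt0 alt1)
  finally show ?thesis .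
qed

lemma odd_moment:
  assumes "3 \<le> m"
  shows "(\<Sum>j\<le>m. if odd j then real (m choose j) * (a + b * real j + c * real j ^ 2) else 0)
     = (a * 2^m + b * real m * 2^(m-1) + c * real m * (real (m-1) * 2^(m-2) + 2^(m-1))) / 2"
proof -
  obtain n where mn: "m = Suc n" and n2: "2 \<le> n" using assms by (cases m) auto
  have eq: "\<And>j::nat. 2 * (if odd j then real (m choose j) * (a + b * real j + c * real j ^ 2) else 0)
     = a * real (m choose j) + b * (real j * real (m choose j)) + c * (real j ^ 2 * real (m choose j))
      - (a * ((-1)^j * real (m choose j)) + b * ((-1)^j * real j * real (m choose j)) + c * ((-1)^j * real j ^ 2 * real (m choose j)))"
    by (simp add: algebra_simps)
  have "2 * (\<Sum>j\<le>m. if odd j then real (m choose j) * (a + b * real j + c * real j ^ 2) else 0)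
     = (\<Sum>j\<le>m. a * real (m choose j) + b * (real j * real (m choose j)) + c * (real j ^ 2 * real (m choose j))
      - (a * ((-1)^j * real (m choose j)) + b * ((-1)^j * real j * real (m choose j)) + c * ((-1)^j * real j ^ 2 * real (m choose j))))"
    by (simp only: sum_distrib_left eq)
  also have "\<dots> = a * (\<Sum>j\<le>m. real (m choose j)) + b * (\<Sum>j\<le>m. real j * real (m choose j)) + c * (\<Sum>j\<le>m. real j ^ 2 * real (m choose j))
      - (a * (\<Sum>j\<le>m. (-1)^j * real (m choose j)) + b * (\<Sum>j\<le>m. (-1)^j * real j * real (m choose j)) + c * (\<Sum>j\<le>m. (-1)^j * real j ^ 2 * real (m choose j)))"
    by (simp add: sum.distrib sum_subtractf sum_distrib_left)
  also have "\<dots> = a * 2^m + b * real m * 2^(m-1) + c * real m * (real (m-1) * 2^(m-2) + 2^(m-1))"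
  proof -
    have A0: "(\<Sum>j\<le>m. (-1)^j * real (m choose j)) = 0" using mn by (intro alt0) simp
    have A1: "(\<Sum>j\<le>m. (-1)^j * real j * real (m choose j)) = 0" using mn n2 by (intro alt1) simp
    have A2: "(\<Sum>j\<le>m. (-1)^j * real j ^ 2 * real (m choose j)) = 0" using alt2[OF n2] mn by simp
    have M2: "(\<Sum>j\<le>m. real j ^ 2 * real (m choose j)) = real m * (real (m-1) * 2^(m-2) + 2^(m-1))"
      using mom2[of n] mn by simp
    show ?thesis by (simp only: A0 A1 A2 M2 mom0 mom1)
  qed
  finally show ?thesis by simp
qed

lemma odd_reindex: fixes f :: "nat \<Rightarrow> real" and K :: nat shows "(\<Sum>u\<le>K. f (2*u+1)) = (\<Sum>j\<le>2*K+1. if odd j then f j else (0::real))"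
proof (induction K)
  case 0 then show ?case by (simp add: atMost_Suc)
next
  case (Suc K)
  have e: "2 * Suc K + 1 = Suc (Suc (2*K+1))" by simp
  show ?case unfolding e using Suc by (simp add: atMost_Suc)
qed

lemma ss_odd: "ss m (2*t+1) = (\<Sum>u\<le>t. real (Suc m choose (2*u+1)))"
proof (induction t)
  case 0 then show ?case by (simp add: ss_def atMost_Suc)
next
  case (Suc t)
  have e: "2 * Suc t + 1 = Suc (Suc (2*t+1))" by simp
  have "Suc m choose (2 * Suc t + 1) = (m choose (Suc (2*t+1))) + (m choose Suc (Suc (2*t+1)))"
    unfolding e by simp
  then show ?case unfolding e using Suc by (simp add: ss_step)
qed

lemma oddsum:
  assumes "m = 2*K+1 \<or> m = 2*K+2" "3 \<le> m"
  shows "(\<Sum>u\<le>K. real (m choose (2*u+1)) * (a + b * real (2*u+1) + c * real (2*u+1) ^ 2))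
     = (a * 2^m + b * real m * 2^(m-1) + c * real m * (real (m-1) * 2^(m-2) + 2^(m-1))) / 2"
proof -
  have "(\<Sum>u\<le>K. real (m choose (2*u+1)) * (a + b * real (2*u+1) + c * real (2*u+1) ^ 2))
      = (\<Sum>j\<le>2*K+1. if odd j then real (m choose j) * (a + b * real j + c * real j ^ 2) else 0)"
    by (rule odd_reindex[where f = "\<lambda>j. real (m choose j) * (a + b * real j + c * real j ^ 2)"])
  also have "\<dots> = (\<Sum>j\<le>m. if odd j then real (m choose j) * (a + b * real j + c * real j ^ 2) else 0)"
    using assms(1)
  proof
    assume "m = 2*K+2"
    then have e: "m = Suc (2*K+1)" by simp
    show ?thesis unfolding e by (simp only: sum.atMost_Suc) simp
  qed simp
  also have "\<dots> = (a * 2^m + b * real m * 2^(m-1) + c * real m * (real (m-1) * 2^(m-2) + 2^(m-1))) / 2"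
    by (rule odd_moment[OF assms(2)])
  finally show ?thesis .
qed

lemma G1a: "(\<Sum>t\<le>p. \<Sum>u\<le>t. c u) = (\<Sum>u\<le>p. c u * (real p + 1 - real u))"
proof (induction p)
  case 0 then show ?case by simp
next
  case (Suc p)
  have "(\<Sum>u\<le>Suc p. c u * (real (Suc p) + 1 - real u)) = (\<Sum>u\<le>p. c u * (real p + 1 - real u)) + (\<Sum>u\<le>Suc p. c u)"
    by (simp add: sum.distrib[symmetric] algebra_simps)
  then show ?case using Suc by simp
qed

lemma G1: "(\<Sum>t<p. (real p - real t) * (\<Sum>u\<le>t. c u)) = (\<Sum>u<p. c u * ((real p - real u)*(real p - real u + 1)/2))"
proof (induction p)
  case 0 then show ?case by simp
next
  case (Suc p)
  have "(\<Sum>t<Suc p. (real (Suc p) - real t) * (\<Sum>u\<le>t. c u)) = (\<Sum>t<p. (real p - real t) * (\<Sum>u\<le>t. c u)) + (\<Sum>t\<le>p. \<Sum>u\<le>t. c u)"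
    by (simp add: lessThan_Suc_atMost[symmetric] sum.distrib[symmetric] algebra_simps)
  also have "\<dots> = (\<Sum>u<p. c u * ((real p - real u)*(real p - real u + 1)/2)) + (\<Sum>u\<le>p. c u * (real p + 1 - real u))"
    using Suc G1a by simp
  also have "\<dots> = (\<Sum>u<p. c u * ((real p - real u)*(real p - real u + 1)/2) + c u * (real p + 1 - real u)) + c p"
    by (simp add: lessThan_Suc_atMost[symmetric] sum.distrib)
  also have "\<dots> = (\<Sum>u<p. c u * ((real (Suc p) - real u)*(real (Suc p) - real u + 1)/2)) + c p"
    by (intro arg_cong2[where f="(+)"] sum.cong refl) (simp add: field_simps)
  also have "\<dots> = (\<Sum>u<Suc p. c u * ((real (Suc p) - real u)*(real (Suc p) - real u + 1)/2))"
    by simp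
  finally show ?case .
qed

lemma G1rev: "(\<Sum>i=1..p. real i * F (p - i)) = (\<Sum>t<p. (real p - real t) * F t)"
proof -
  have "(\<Sum>i=1..p. real i * F (p - i)) = (\<Sum>i<p. real (Suc i) * F (p - Suc i))"
    by (simp add: sum.atLeast1_atMost_eq)
  also have "\<dots> = (\<Sum>i<p. (\<lambda>t. (real p - real t) * F t) (p - Suc i))"
    by (intro sum.cong) (auto simp: of_nat_diff)
  also have "\<dots> = (\<Sum>t<p. (real p - real t) * F t)" by (rule sum.nat_diff_reindex)
  finally show ?thesis .
qed

lemma G2: "(\<Sum>i=1..p. real i * (\<Sum>u\<le>i. c u)) = (\<Sum>u\<le>p. c u * ((real p * (real p + 1) - real u * (real u - 1))/2))"
proof (induction p)
  case 0 then show ?case by simp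
next
  case (Suc p)
  have "(\<Sum>u\<le>Suc p. c u * ((real (Suc p) * (real (Suc p) + 1) - real u * (real u - 1))/2))
     = (\<Sum>u\<le>p. c u * ((real p * (real p + 1) - real u * (real u - 1))/2)) + real (Suc p) * (\<Sum>u\<le>Suc p. c u)"
    by (simp add: sum.distrib[symmetric] sum_distrib_left algebra_simps add_divide_distrib diff_divide_distrib)
  then show ?case using Suc by simp
qed

lemma pow4: "(4::real)^p = (2^p)^2"
  by (induction p) (simp_all add: power_mult_distrib)

lemma L4: "(\<Sum>i=1..p. real i * real ((2*p+3) choose (2*i+1))) = (2*real p+1)*4^p - (real p+1)"
proof -
  have "(\<Sum>i=1..p. real i * real ((2*p+3) choose (2*i+1))) = (\<Sum>i\<le>p. real i * real ((2*p+3) choose (2*i+1)))"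
    by (simp add: atLeast1_atMost_eq_remove0 sum_diff1)
  also have "\<dots> = (\<Sum>u\<le>p+1. real ((2*p+3) choose (2*u+1)) * (-1/2 + 1/2 * real (2*u+1) + 0 * real (2*u+1) ^ 2)) - (real p + 1)"
  proof -
    have e: "2*(p+1)+1 = 2*p+3" by simp
    have c1: "(2*p+3) choose (2*(p+1)+1) = 1" by (simp only: e binomial_n_n)
    have "(\<Sum>u\<le>p+1. real ((2*p+3) choose (2*u+1)) * (-1/2 + 1/2 * real (2*u+1) + 0 * real (2*u+1) ^ 2))
       = (\<Sum>i\<le>p. real i * real ((2*p+3) choose (2*i+1))) + real ((2*p+3) choose (2*(p+1)+1)) * real (p+1)"
      by (simp only: Suc_eq_plus1[symmetric] sum.atMost_Suc) (simp add: algebra_simps)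
    then show ?thesis using c1 by simp
  qed
  also have "\<dots> = (2*real p+1)*4^p - (real p+1)"
    by (subst oddsum) (auto simp: power_add power_mult algebra_simps pow4)
  finally show ?thesis .
qed

lemma atMost_split: fixes f :: "nat \<Rightarrow> real" shows "(\<Sum>u\<le>p. f u) = (\<Sum>u<p. f u) + (f p::real)"
  using sum.lessThan_Suc[of f p] by (simp add: lessThan_Suc_atMost)

lemma ext2: fixes f :: "nat \<Rightarrow> real" shows "f p = 0 \<Longrightarrow> f (p+1) = 0 \<Longrightarrow> (\<Sum>u<p. f u) = (\<Sum>u\<le>p+1. f u)"
  using atMost_split[where p="p+1" and f=f] atMost_split[where p=p and f=f] by (simp add: lessThan_Suc_atMost[symmetric])

lemma ext3: fixes f :: "nat \<Rightarrow> real" shows "f p = 0 \<Longrightarrow> f (p+1) = 0 \<Longrightarrow> (\<Sum>u<p. f u) = (\<Sum>u\<le>p+2. f u) - f (p+2)"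
proof -
  assume a: "f p = 0" "f (p+1) = 0"
  have "(\<Sum>u\<le>p+2. f u) = (\<Sum>u\<le>p+1. f u) + f (p+2)"
    using atMost_split[where p="p+2" and f=f] by (simp add: lessThan_Suc_atMost[symmetric] numeral_2_eq_2)
  then show ?thesis using ext2[OF a] by simp
qed

lemma ss_rev_odd: "i \<le> p \<Longrightarrow> ss m (2*p+1-2*i) = (\<Sum>u\<le>p-i. real (Suc m choose (2*u+1)))"
proof -
  assume "i \<le> p"
  then have "2*p+1-2*i = 2*(p-i)+1" by simp
  then show ?thesis by (simp only: ss_odd)
qed

lemma L1: "(\<Sum>i=1..p. real i * ss (2*p+3) (2*p+1-2*i)) = real p*(2*real p+1)*4^p/2"
proof -
  define c where "c u = real ((2*p+4) choose (2*u+1))" for u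
  define a where "a = (2*real p+1)*(2*real p+3)/8"
  define b where "b = -(4*real p+4)/8"
  have "(\<Sum>i=1..p. real i * ss (2*p+3) (2*p+1-2*i)) = (\<Sum>i=1..p. real i * (\<Sum>u\<le>p-i. c u))"
  proof (intro sum.cong refl)
    fix i assume "i \<in> {1..p}"
    then have "i \<le> p" by simp
    have e4: "Suc (2*p+3) = 2*p+4" by simp
    have "ss (2*p+3) (2*p+1-2*i) = (\<Sum>u\<le>p-i. c u)"
      using ss_rev_odd[OF \<open>i \<le> p\<close>, of "2*p+3"] by (simp only: e4 c_def)
    then show "real i * ss (2*p+3) (2*p+1-2*i) = real i * (\<Sum>u\<le>p-i. c u)" by simp
  qed
  also have "\<dots> = (\<Sum>t<p. (real p - real t) * (\<Sum>u\<le>t. c u))"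
    by (rule G1rev[where F="\<lambda>t. \<Sum>u\<le>t. c u"])
  also have "\<dots> = (\<Sum>u<p. c u * ((real p - real u)*(real p - real u + 1)/2))"
    by (rule G1)
  also have "\<dots> = (\<Sum>u<p. c u * (a + b * real (2*u+1) + 1/8 * real (2*u+1)^2))"
    by (intro sum.cong refl) (simp add: a_def b_def field_simps power2_eq_square)
  also have "\<dots> = (\<Sum>u\<le>p+1. c u * (a + b * real (2*u+1) + 1/8 * real (2*u+1)^2))"
    by (rule ext2) (simp_all add: a_def b_def field_simps power2_eq_square)
  also have "\<dots> = real p*(2*real p+1)*4^p/2"
    unfolding c_def
    by (subst oddsum[where m="2*p+4"]) (auto simp: a_def b_def power_add power_mult field_simps pow4)
  finally show ?thesis .
qed

lemma L2: "(\<Sum>i=1..p. real i * ss (2*p+4) (2*p+1-2*i)) = (2*real p^2 - real p+1)*4^p - 1"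
proof -
  define c where "c u = real ((2*p+5) choose (2*u+1))" for u
  define a where "a = (2*real p+1)*(2*real p+3)/8"
  define b where "b = -(4*real p+4)/8"
  have c1: "c (p+2) = 1"
  proof -
    have e: "2*(p+2)+1 = 2*p+5" by simp
    show ?thesis unfolding c_def by (simp only: e binomial_n_n of_nat_1)
  qed
  have "(\<Sum>i=1..p. real i * ss (2*p+4) (2*p+1-2*i)) = (\<Sum>i=1..p. real i * (\<Sum>u\<le>p-i. c u))"
  proof (intro sum.cong refl)
    fix i assume "i \<in> {1..p}"
    then have "i \<le> p" by simp
    have e4: "Suc (2*p+4) = 2*p+5" by simp
    have "ss (2*p+4) (2*p+1-2*i) = (\<Sum>u\<le>p-i. c u)"
      using ss_rev_odd[OF \<open>i \<le> p\<close>, of "2*p+4"] by (simp only: e4 c_def)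
    then show "real i * ss (2*p+4) (2*p+1-2*i) = real i * (\<Sum>u\<le>p-i. c u)" by simp
  qed
  also have "\<dots> = (\<Sum>t<p. (real p - real t) * (\<Sum>u\<le>t. c u))"
    by (rule G1rev[where F="\<lambda>t. \<Sum>u\<le>t. c u"])
  also have "\<dots> = (\<Sum>u<p. c u * ((real p - real u)*(real p - real u + 1)/2))"
    by (rule G1)
  also have "\<dots> = (\<Sum>u<p. c u * (a + b * real (2*u+1) + 1/8 * real (2*u+1)^2))"
    by (intro sum.cong refl) (simp add: a_def b_def field_simps power2_eq_square)
  also have "\<dots> = (\<Sum>u\<le>p+2. c u * (a + b * real (2*u+1) + 1/8 * real (2*u+1)^2)) - c (p+2) * (a + b * real (2*(p+2)+1) + 1/8 * real (2*(p+2)+1)^2)"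
    by (rule ext3) (simp_all add: a_def b_def field_simps power2_eq_square)
  also have "\<dots> = (2*real p^2 - real p+1)*4^p - 1"
    unfolding c1 unfolding c_def
    by (subst oddsum[where m="2*p+5"]) (auto simp: a_def b_def power_add power_mult field_simps pow4 power2_eq_square)
  finally show ?thesis .
qed

lemma L3: "(\<Sum>i=1..p. real i * ss (2*p+4) (2*i+1)) = (6*real p^2 + 5*real p - 1)*4^p + real p + 1"
proof -
  define c where "c u = real ((2*p+5) choose (2*u+1))" for u
  define a where "a = (4*real p^2+4*real p-3)/8"
  have c1: "c (p+2) = 1"
  proof -
    have e: "2*(p+2)+1 = 2*p+5" by simp
    show ?thesis unfolding c_def by (simp only: e binomial_n_n of_nat_1)
  qed
  have "(\<Sum>i=1..p. real i * ss (2*p+4) (2*i+1)) = (\<Sum>i=1..p. real i * (\<Sum>u\<le>i. c u))"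
  proof (intro sum.cong refl)
    fix i
    have e4: "Suc (2*p+4) = 2*p+5" by simp
    have "ss (2*p+4) (2*i+1) = (\<Sum>u\<le>i. c u)"
      using ss_odd[of "2*p+4" i] by (simp only: e4 c_def)
    then show "real i * ss (2*p+4) (2*i+1) = real i * (\<Sum>u\<le>i. c u)" by simp
  qed
  also have "\<dots> = (\<Sum>u\<le>p. c u * ((real p * (real p + 1) - real u * (real u - 1))/2))"
    by (rule G2)
  also have "\<dots> = (\<Sum>u<Suc p. c u * (a + 1/2 * real (2*u+1) - 1/8 * real (2*u+1)^2))"
    unfolding lessThan_Suc_atMost
    by (intro sum.cong refl) (simp add: a_def field_simps power2_eq_square)
  also have "\<dots> = (\<Sum>u\<le>p+2. c u * (a + 1/2 * real (2*u+1) - 1/8 * real (2*u+1)^2)) + (real p + 1)"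
  proof -
    define f where "f u = c u * (a + 1/2 * real (2*u+1) - 1/8 * real (2*u+1)^2)" for u
    have s1: "(\<Sum>u\<le>p+2. f u) = (\<Sum>u<Suc p. f u) + f (p+1) + f (p+2)"
      using atMost_split[where p="p+2" and f=f] atMost_split[where p="p+1" and f=f]
      by (simp add: lessThan_Suc_atMost[symmetric] numeral_2_eq_2)
    have f1: "f (p+1) = 0" by (simp add: f_def a_def field_simps power2_eq_square)
    have f2: "f (p+2) = -(real p+1)" unfolding f_def c1 by (simp add: a_def field_simps power2_eq_square)
    show ?thesis using s1 f1 f2 unfolding f_def by simp
  qed
  also have "\<dots> = (\<Sum>u\<le>p+2. c u * (a + 1/2 * real (2*u+1) + (-1/8) * real (2*u+1)^2)) + (real p + 1)"
    by simp
  also have "\<dots> = (6*real p^2 + 5*real p - 1)*4^p + real p + 1"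
    unfolding c_def
    by (subst oddsum[where m="2*p+5"]) (auto simp: a_def power_add power_mult field_simps pow4 power2_eq_square)
  finally show ?thesis .
qed

lemma tele3: "a \<le> Suc b \<Longrightarrow> (\<Sum>k=a..b. real ((k+c) choose r)/2^k)
   = 2*ss (a+c) r/2^a - 2*ss (Suc b+c) r/2^(Suc b)"
proof -
  assume ab: "a \<le> Suc b"
  have e: "a + (Suc b - a) = Suc b" using ab by simp
  show ?thesis using tele[where a=a and d="Suc b - a" and c=c and r=r]
    unfolding e by (simp add: atLeastLessThanSuc_atLeastAtMost)
qed

lemma pw: "(2::real) powr (real a - real b) = 2^a / 2^b"
  by (simp add: powr_diff powr_realpow)

lemma pw1: "(2::real) powr (1 - real n) = 2/2^n" using pw[of 1 n] by simp
lemma pw4: "(2::real) powr (2 - real n) = 4/2^n" using pw[of 2 n] by simp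
lemma pw5: "(2::real) powr (- real k) = 1/2^k" using pw[of 0 k] by simp
lemma pw2: "(2::real) powr (1 - 2*real p) = 2/4^p"
  using pw[of 1 "2*p"] by (simp add: power_mult)
lemma pw3: "(2::real) powr (1 - real n - 2*real p) = 2/(2^n*4^p)"
  using pw[of 1 "n+2*p"] by (simp add: power_mult power_add diff_diff_eq)

lemma aux1: "c * 2 powr (- real k) * (a * x - y + z) = (c*a) * (x/2^k) - c * (y/2^k) + c * (z/2^k)"
  by (simp add: pw5 field_simps)

lemma aux3: "c * 2 powr (- real k) * (x - b * y) = c * (x/2^k) - (c*b) * (y/2^k)"
  by (simp add: pw5 field_simps)

lemma aux4: "c*X - (c*b)*(Y::real) = c*(X - b*Y)"
  by (simp add: algebra_simps)

lemma aux2: "(c*a)*X - c*Y + c*(Z::real) = c*(a*X - Y + Z)"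
  by (simp add: algebra_simps)

lemma per_i:
  assumes i1: "1 \<le> i" and ip: "i \<le> p"
  shows "2 powr (1 - real n - 2*real p) * (real i * (2 * real ((n+2*p+3) choose (n+2*i+1))
                          - real ((n+2*p+3) choose (n+2*i+2))
                          - (2*real n + 4*real p + 4) * real ((2*p+3) choose (2*i+1))))
  + 2 powr (2 - real n) * (\<Sum>k=2*i-1..2*p. real i * 2 powr (- real k) *
        ((real n + 2*real p) / (real n + 2*real p + 1) * real ((n+k+2) choose (n+2*i+1))
         - real ((n+k+2) choose (n+2*i)) + real ((k+3) choose (2*i+1))))
  + 2 powr (1 - 2*real p) * (\<Sum>k=1..n. real i * 2 powr (- real k) *
        (real ((k+2*p+3) choose (k+2*i+2))
         - (2*real n + 4*real p + 4) / (real n + 2*real p + 1) * real ((k+2*p+2) choose (k+2*i+1))))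
  = real i * (64/2^n - 4/(2^n*4^p) * ss (2*p+4) (2*i+1) + 2/4^p * ss (2*p+4) (2*p+1-2*i)
      - 4/4^p * (real n + 2*real p + 2)/(real n + 2*real p + 1) * ss (2*p+3) (2*p+1-2*i)
      - 4/(2^n*4^p) * (real n + 2*real p + 2) * real ((2*p+3) choose (2*i+1)))"
proof -
  define r where "r = 2*p+1-2*i"
  define M where "M = n+2*p+3"
  define A where "A = (2::real)^n"
  define B where "B = (4::real)^p"
  define D where "D = (4::real)^i"
  define X1 where "X1 = ss M r"
  define X2 where "X2 = real (M choose r)"
  define X3 where "X3 = real (M choose Suc r)"
  define Y1 where "Y1 = ss (2*p+4) r"
  define Y2 where "Y2 = ss (2*p+3) r"
  define Y3 where "Y3 = ss (2*p+4) (2*i+1)"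
  define Y4 where "Y4 = real ((2*p+3) choose (2*i+1))"
  define N where "N = real n + 2*real p + 1"
  have Npos: "N > 0" unfolding N_def by simp
  have Apos: "A > 0" and Bpos: "B > 0" and Dpos: "D > 0" unfolding A_def B_def D_def by simp_all
  have pD: "(2::real)^(2*i-1) = D/2"
  proof -
    obtain j where j: "i = Suc j" using i1 by (cases i) auto
    have "2*i-1 = Suc (2*j)" using j by simp
    then show ?thesis unfolding D_def j by (simp add: power_mult)
  qed
  have pB: "(2::real)^(Suc (2*p)) = 2*B" unfolding B_def by (simp add: power_mult)
  have U1: "(\<Sum>k=2*i-1..2*p. real ((n+k+2) choose (n+2*i+1))/2^k) = 2*(2*A*D)/(D/2) - 2*(8*A*B - X1)/(2*B)"
  proof -
    have "(\<Sum>k=2*i-1..2*p. real ((n+k+2) choose (n+2*i+1))/2^k) = (\<Sum>k=2*i-1..2*p. real ((k+(n+2)) choose (n+2*i+1))/2^k)"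
      by (simp add: add.commute add.left_commute)
    also have "\<dots> = 2*ss (2*i-1+(n+2)) (n+2*i+1)/2^(2*i-1) - 2*ss (Suc (2*p)+(n+2)) (n+2*i+1)/2^(Suc (2*p))"
      using ip by (intro tele3) simp
    also have "ss (2*i-1+(n+2)) (n+2*i+1) = 2*A*D"
    proof -
      have "2*i-1+(n+2) = n+2*i+1" using i1 by simp
      then show ?thesis unfolding A_def D_def by (simp add: ss_full power_add power_mult)
    qed
    also have "ss (Suc (2*p)+(n+2)) (n+2*i+1) = 8*A*B - X1"
    proof -
      have e: "Suc (2*p)+(n+2) = M" unfolding M_def by simp
      have "ss M (n+2*i+1) + ss M (M - Suc (n+2*i+1)) = 2^M" using ip by (intro ss_compl) (simp add: M_def)
      moreover have "M - Suc (n+2*i+1) = r" unfolding M_def r_def using ip by simp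
      moreover have "(2::real)^M = 8*A*B" unfolding M_def A_def B_def by (simp add: power_add power_mult)
      ultimately show ?thesis unfolding e X1_def by simp
    qed
    finally show ?thesis unfolding pD pB by simp
  qed
  have U2: "(\<Sum>k=2*i-1..2*p. real ((n+k+2) choose (n+2*i))/2^k) = 2*(2*A*D - 1)/(D/2) - 2*(8*A*B - X1 - X3)/(2*B)"
  proof -
    have "(\<Sum>k=2*i-1..2*p. real ((n+k+2) choose (n+2*i))/2^k) = (\<Sum>k=2*i-1..2*p. real ((k+(n+2)) choose (n+2*i))/2^k)"
      by (simp add: add.commute add.left_commute)
    also have "\<dots> = 2*ss (2*i-1+(n+2)) (n+2*i)/2^(2*i-1) - 2*ss (Suc (2*p)+(n+2)) (n+2*i)/2^(Suc (2*p))"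
      using ip by (intro tele3) simp
    also have "ss (2*i-1+(n+2)) (n+2*i) = 2*A*D - 1"
    proof -
      have e: "2*i-1+(n+2) = n+2*i+1" using i1 by simp
      have "ss (n+2*i+1) (n+2*i) + ss (n+2*i+1) (n+2*i+1 - Suc (n+2*i)) = 2^(n+2*i+1)" by (intro ss_compl) simp
      then show ?thesis unfolding e A_def D_def by (simp add: power_add power_mult)
    qed
    also have "ss (Suc (2*p)+(n+2)) (n+2*i) = 8*A*B - X1 - X3"
    proof -
      have e: "Suc (2*p)+(n+2) = M" unfolding M_def by simp
      have "ss M (n+2*i) + ss M (M - Suc (n+2*i)) = 2^M" using ip by (intro ss_compl) (simp add: M_def)
      moreover have "M - Suc (n+2*i) = Suc r" unfolding M_def r_def using ip by simp
      moreover have "(2::real)^M = 8*A*B" unfolding M_def A_def B_def by (simp add: power_add power_mult)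
      ultimately show ?thesis unfolding e X1_def X3_def by (simp add: ss_step)
    qed
    finally show ?thesis unfolding pD pB by simp
  qed
  have U3: "(\<Sum>k=2*i-1..2*p. real ((k+3) choose (2*i+1))/2^k) = 2*(4*D - 1)/(D/2) - 2*Y3/(2*B)"
  proof -
    have "(\<Sum>k=2*i-1..2*p. real ((k+3) choose (2*i+1))/2^k) = 2*ss (2*i-1+3) (2*i+1)/2^(2*i-1) - 2*ss (Suc (2*p)+3) (2*i+1)/2^(Suc (2*p))"
      using ip by (intro tele3) simp
    also have "ss (2*i-1+3) (2*i+1) = 4*D - 1"
    proof -
      have e: "2*i-1+3 = 2*i+2" using i1 by simp
      have "ss (2*i+2) (2*i+1) + ss (2*i+2) (2*i+2 - Suc (2*i+1)) = 2^(2*i+2)" by (intro ss_compl) simp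
      then show ?thesis unfolding e D_def by (simp add: power_add power_mult)
    qed
    also have "Suc (2*p)+3 = 2*p+4" by simp
    finally show ?thesis unfolding pD pB Y3_def by simp
  qed
  have V1: "(\<Sum>k=1..n. real ((k+2*p+3) choose (k+2*i+2))/2^k) = Y1 - (2*X1 - X2)/A"
  proof -
    have "(\<Sum>k=1..n. real ((k+2*p+3) choose (k+2*i+2))/2^k) = (\<Sum>k=1..n. real ((k+(2*p+3)) choose r)/2^k)"
    proof (intro sum.cong refl)
      fix k
      have "(k+2*p+3) choose (k+2*i+2) = (k+2*p+3) choose ((k+2*p+3) - (k+2*i+2))"
        using ip by (intro binomial_symmetric) simp
      also have "(k+2*p+3) - (k+2*i+2) = r" unfolding r_def using ip by simp
      finally show "real ((k+2*p+3) choose (k+2*i+2))/2^k = real ((k+(2*p+3)) choose r)/2^k"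
        by (simp add: add.assoc)
    qed
    also have "\<dots> = 2*ss (1+(2*p+3)) r/2^1 - 2*ss (Suc n+(2*p+3)) r/2^(Suc n)"
      by (intro tele3) simp
    also have "ss (Suc n+(2*p+3)) r = 2*X1 - X2"
    proof -
      have e: "Suc n+(2*p+3) = Suc M" unfolding M_def by simp
      show ?thesis unfolding e ss_Suc X1_def X2_def ..
    qed
    also have "1+(2*p+3) = 2*p+4" by simp
    finally have "(\<Sum>k=1..n. real ((k+2*p+3) choose (k+2*i+2))/2^k) = 2 * Y1 / 2 - 2 * (2*X1 - X2) / (2 * A)"
      unfolding Y1_def A_def by simp
    then show ?thesis using Apos by (simp add: field_simps)
  qed
  have V2: "(\<Sum>k=1..n. real ((k+2*p+2) choose (k+2*i+1))/2^k) = Y2 - X1/A"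
  proof -
    have "(\<Sum>k=1..n. real ((k+2*p+2) choose (k+2*i+1))/2^k) = (\<Sum>k=1..n. real ((k+(2*p+2)) choose r)/2^k)"
    proof (intro sum.cong refl)
      fix k
      have "(k+2*p+2) choose (k+2*i+1) = (k+2*p+2) choose ((k+2*p+2) - (k+2*i+1))"
        using ip by (intro binomial_symmetric) simp
      also have "(k+2*p+2) - (k+2*i+1) = r" unfolding r_def using ip by simp
      finally show "real ((k+2*p+2) choose (k+2*i+1))/2^k = real ((k+(2*p+2)) choose r)/2^k"
        by (simp add: add.assoc)
    qed
    also have "\<dots> = 2*ss (1+(2*p+2)) r/2^1 - 2*ss (Suc n+(2*p+2)) r/2^(Suc n)"
      by (intro tele3) simp
    also have "Suc n+(2*p+2) = M" unfolding M_def by simp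
    also have "1+(2*p+2) = 2*p+3" by simp
    finally show ?thesis unfolding Y2_def A_def X1_def by simp
  qed
  have C1: "real ((n+2*p+3) choose (n+2*i+1)) = X3"
  proof -
    have "M choose (n+2*i+1) = M choose (M - (n+2*i+1))" using ip by (intro binomial_symmetric) (simp add: M_def)
    moreover have "M - (n+2*i+1) = Suc r" unfolding M_def r_def using ip by simp
    ultimately show ?thesis unfolding X3_def M_def by simp
  qed
  have C2: "real ((n+2*p+3) choose (n+2*i+2)) = X2"
  proof -
    have "M choose (n+2*i+2) = M choose (M - (n+2*i+2))" using ip by (intro binomial_symmetric) (simp add: M_def)
    moreover have "M - (n+2*i+2) = r" unfolding M_def r_def using ip by simp
    ultimately show ?thesis unfolding X2_def M_def by simp
  qed
  have S2: "(\<Sum>k=2*i-1..2*p. real i * 2 powr (- real k) *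
        ((real n + 2*real p) / (real n + 2*real p + 1) * real ((n+k+2) choose (n+2*i+1))
         - real ((n+k+2) choose (n+2*i)) + real ((k+3) choose (2*i+1))))
     = real i * ((real n + 2*real p) / (real n + 2*real p + 1) * (\<Sum>k=2*i-1..2*p. real ((n+k+2) choose (n+2*i+1))/2^k)
         - (\<Sum>k=2*i-1..2*p. real ((n+k+2) choose (n+2*i))/2^k) + (\<Sum>k=2*i-1..2*p. real ((k+3) choose (2*i+1))/2^k))"
    (is "?L = real i * (?a * ?X - ?Y + ?Z)")
  proof -
    have "?L = (\<Sum>k=2*i-1..2*p. (real i * ?a) * (real ((n+k+2) choose (n+2*i+1))/2^k) - real i * (real ((n+k+2) choose (n+2*i))/2^k) + real i * (real ((k+3) choose (2*i+1))/2^k))"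
      by (intro sum.cong refl aux1)
    also have "\<dots> = (real i * ?a) * ?X - real i * ?Y + real i * ?Z"
      by (simp only: sum.distrib sum_subtractf sum_distrib_left)
    finally show ?thesis by (simp only: aux2)
  qed
  have S3: "(\<Sum>k=1..n. real i * 2 powr (- real k) *
        (real ((k+2*p+3) choose (k+2*i+2))
         - (2*real n + 4*real p + 4) / (real n + 2*real p + 1) * real ((k+2*p+2) choose (k+2*i+1))))
     = real i * ((\<Sum>k=1..n. real ((k+2*p+3) choose (k+2*i+2))/2^k)
         - (2*real n + 4*real p + 4) / (real n + 2*real p + 1) * (\<Sum>k=1..n. real ((k+2*p+2) choose (k+2*i+1))/2^k))"
    (is "?L = real i * (?X - ?b * ?Y)")
  proof -
    have "?L = (\<Sum>k=1..n. real i * (real ((k+2*p+3) choose (k+2*i+2))/2^k) - (real i * ?b) * (real ((k+2*p+2) choose (k+2*i+1))/2^k))"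
      by (intro sum.cong refl aux3)
    also have "\<dots> = real i * ?X - (real i * ?b) * ?Y"
      by (simp only: sum_subtractf sum_distrib_left)
    finally show ?thesis by (simp only: aux4)
  qed
  have nz: "real n + 2*real p + 1 \<noteq> 0" by (simp add: add_pos_nonneg)
  have fin: "2/(A*B) * (real i * (2 * X3 - X2 - (2*real n + 4*real p + 4) * Y4))
    + 4/A * (real i * ((real n + 2*real p) / (real n + 2*real p + 1) * (2*(2*A*D)/(D/2) - 2*(8*A*B - X1)/(2*B))
         - (2*(2*A*D - 1)/(D/2) - 2*(8*A*B - X1 - X3)/(2*B)) + (2*(4*D - 1)/(D/2) - 2*Y3/(2*B))))
    + 2/B * (real i * ((Y1 - (2*X1 - X2)/A) - (2*real n + 4*real p + 4) / (real n + 2*real p + 1) * (Y2 - X1/A)))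
    = real i * (64/A - 4/(A*B) * Y3 + 2/B * Y1
      - 4/B * (real n + 2*real p + 2)/(real n + 2*real p + 1) * Y2
      - 4/(A*B) * (real n + 2*real p + 2) * Y4)"
  proof -
    define s0 where "s0 = real n + 2*real p"
    have s0: "s0 \<ge> 0" unfolding s0_def by simp
    have e: "2*real n + 4*real p + 4 = 2*s0+4" unfolding s0_def by simp
    have nz1: "s0 + 1 \<noteq> 0" "1 + s0 \<noteq> 0" using s0 by simp_all
    define NN where "NN = s0 + 1"
    have s0N: "s0 = NN - 1" unfolding NN_def by simp
    have NNpos: "NN > 0" unfolding NN_def using s0 by simp
    have r1: "NN - 1 + 1 = NN" "NN - 1 + 2 = NN + 1" "2*(NN-1)+4 = 2*(NN+1)" by simp_all
    show ?thesis unfolding e s0_def[symmetric] s0N r1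
      using Apos Bpos Dpos NNpos by (simp add: field_simps)
  qed
  show ?thesis
    unfolding S2 S3 U1 U2 U3 V1 V2 C1 C2 pw2 pw3 pw4
    unfolding A_def[symmetric] B_def[symmetric] Y4_def[symmetric] Y3_def[symmetric]
      r_def[symmetric] Y1_def[symmetric] Y2_def[symmetric]
    by (rule fin)
qed



lemma sumi: "(\<Sum>i=1..p. real i) = real p * (real p + 1) / 2"
  by (induction p) (simp_all add: field_simps)

lemma aux5: "(i::real) * (a - b*y3 + c*y1 - d*y2 - e*y4) = a*i - b*(i*y3) + c*(i*y1) - d*(i*y2) - e*(i*y4)"
  by (simp add: algebra_simps)

theorem lemma14:
  fixes n p :: nat
  shows "h n p = 0"
proof -
  define F1 where "F1 i = real i * (2 * real ((n+2*p+3) choose (n+2*i+1))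
                          - real ((n+2*p+3) choose (n+2*i+2))
                          - (2*real n + 4*real p + 4) * real ((2*p+3) choose (2*i+1)))" for i
  define F2 where "F2 i = (\<Sum>k=2*i-1..2*p. real i * 2 powr (- real k) *
        ((real n + 2*real p) / (real n + 2*real p + 1) * real ((n+k+2) choose (n+2*i+1))
         - real ((n+k+2) choose (n+2*i)) + real ((k+3) choose (2*i+1))))" for i
  define F3 where "F3 i = (\<Sum>k=1..n. real i * 2 powr (- real k) *
        (real ((k+2*p+3) choose (k+2*i+2))
         - (2*real n + 4*real p + 4) / (real n + 2*real p + 1) * real ((k+2*p+2) choose (k+2*i+1))))" for i
  define c1 where "c1 = (2::real) powr (1 - real n - 2*real p)"
  define c2 where "c2 = (2::real) powr (2 - real n)"
  define c3 where "c3 = (2::real) powr (1 - 2*real p)"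
  define T0 where "T0 = (4*real p^2 + 2*real p) / (real n + 2*real p + 1) + 4*real p - 2
   + (4*real p^2 + 4*real n*real p + 2*real n + 6*real p + 2) * 2 powr (1 - real n)
   + 2 powr (1 - 2*real p)
   - (4*real p^2 + 2*real n*real p + 2*real n + 6*real p + 2) * 2 powr (1 - real n - 2*real p)"
  define R where "R i = real i * (64/2^n - 4/(2^n*4^p) * ss (2*p+4) (2*i+1) + 2/4^p * ss (2*p+4) (2*p+1-2*i)
      - 4/4^p * (real n + 2*real p + 2)/(real n + 2*real p + 1) * ss (2*p+3) (2*p+1-2*i)
      - 4/(2^n*4^p) * (real n + 2*real p + 2) * real ((2*p+3) choose (2*i+1)))" for i
  have h1: "h n p = T0 + (c1 * (\<Sum>i=1..p. F1 i) + c2 * (\<Sum>i=1..p. F2 i) + c3 * (\<Sum>i=1..p. F3 i))"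
    unfolding h_def T0_def F1_def F2_def F3_def c1_def c2_def c3_def by (simp only: add.assoc)
  have h2: "c1 * (\<Sum>i=1..p. F1 i) + c2 * (\<Sum>i=1..p. F2 i) + c3 * (\<Sum>i=1..p. F3 i) = (\<Sum>i=1..p. R i)"
  proof -
    have "c1 * (\<Sum>i=1..p. F1 i) + c2 * (\<Sum>i=1..p. F2 i) + c3 * (\<Sum>i=1..p. F3 i) = (\<Sum>i=1..p. c1 * F1 i + c2 * F2 i + c3 * F3 i)"
      by (simp only: sum.distrib sum_distrib_left)
    also have "\<dots> = (\<Sum>i=1..p. R i)"
    proof (intro sum.cong refl)
      fix i assume "i \<in> {1..p}"
      then have "1 \<le> i" "i \<le> p" by auto
      from per_i[OF this, of n] show "c1 * F1 i + c2 * F2 i + c3 * F3 i = R i"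
        unfolding c1_def c2_def c3_def F1_def F2_def F3_def R_def .
    qed
    finally show ?thesis .
  qed
  define A where "A = (2::real)^n"
  define B where "B = (4::real)^p"
  define d where "d = 4/B * (real n + 2*real p + 2)/(real n + 2*real p + 1)"
  define e where "e = 4/(A*B) * (real n + 2*real p + 2)"
  have h3: "(\<Sum>i=1..p. R i) = 64/A * (\<Sum>i=1..p. real i) - 4/(A*B) * (\<Sum>i=1..p. real i * ss (2*p+4) (2*i+1))
     + 2/B * (\<Sum>i=1..p. real i * ss (2*p+4) (2*p+1-2*i)) - d * (\<Sum>i=1..p. real i * ss (2*p+3) (2*p+1-2*i))
     - e * (\<Sum>i=1..p. real i * real ((2*p+3) choose (2*i+1)))"
  proof -
    have "(\<Sum>i=1..p. R i) = (\<Sum>i=1..p. 64/A * real i - 4/(A*B) * (real i * ss (2*p+4) (2*i+1))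
     + 2/B * (real i * ss (2*p+4) (2*p+1-2*i)) - d * (real i * ss (2*p+3) (2*p+1-2*i))
     - e * (real i * real ((2*p+3) choose (2*i+1))))"
      unfolding R_def A_def[symmetric] B_def[symmetric] d_def[symmetric] e_def[symmetric]
      by (intro sum.cong refl aux5)
    also have "\<dots> = 64/A * (\<Sum>i=1..p. real i) - 4/(A*B) * (\<Sum>i=1..p. real i * ss (2*p+4) (2*i+1))
     + 2/B * (\<Sum>i=1..p. real i * ss (2*p+4) (2*p+1-2*i)) - d * (\<Sum>i=1..p. real i * ss (2*p+3) (2*p+1-2*i))
     - e * (\<Sum>i=1..p. real i * real ((2*p+3) choose (2*i+1)))"
      by (simp only: sum.distrib sum_subtractf sum_distrib_left)
    finally show ?thesis .
  qed
  have fin: "T0 + (64/A * (real p * (real p + 1) / 2) - 4/(A*B) * ((6*real p^2 + 5*real p - 1)*4^p + real p + 1)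
     + 2/B * ((2*real p^2 - real p+1)*4^p - 1) - d * (real p*(2*real p+1)*4^p/2)
     - e * ((2*real p+1)*4^p - (real p+1))) = 0"
  proof -
    define N where "N = real n + 2*real p + 1"
    have Npos: "N > 0" unfolding N_def by simp
    have Apos: "A > 0" and Bpos: "B > 0" unfolding A_def B_def by simp_all
    have q1: "real n + 2*real p + 1 = N" "real n + 2*real p + 2 = N + 1" unfolding N_def by simp_all
    have q2: "real n = N - 2*real p - 1" unfolding N_def by simp
    show ?thesis
      unfolding T0_def d_def e_def pw1 pw2 pw3 A_def[symmetric] B_def[symmetric]
      apply (simp only: q1)
      apply (simp only: q2)
      using Npos Apos Bpos by (simp add: field_simps power2_eq_square)
  qed
  show ?thesis
    unfolding h1 h2 h3 sumi L1 L2 L3 L4 using fin by simp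
qed

end
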